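(* Let $\mathscr{H}$ be a real Hilbert space and let $\mathcal{V}=\{v_n\}_{n=0}^\infty\subset\mathscr{H}$ be a sequence without positive relations such that $\mathcal{C}[[\mathcal{V}]]$ is closed. Then for every $w\in\mathscr{H}$ there is a unique subset $S\subset\mathbb{N}$ such that \[ P_{\mathcal{C}[[\mathcal{V}]]}(w)=\sum_{n\in S} a_n v_n\quad\text{with } a_n>0 \text{ for all } n\in S, \] where the pair $(S,\{a_n\}_{n\in S})$ is uniquely determined by the conditions: (i) $\sum_{n\in S}a_nv_n$ converges in $\mathscr{H}$ and $a_n>0$ for all $n\in S$; (ii) $\sum_{k\in S}a_k\langle v_k,v_n\rangle\ge\langle w,v_n\rangle$ for all $n\in\mathbb{N}$; (iii) $\sum_{k\in S}a_k\langle v_k,v_n\rangle=\langle w,v_n\rangle$ for all $n\in S$.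
   Context: $\mathbb{N}=\{0,1,2,\dots\}$. $\mathcal{C}[[\mathcal{V}]]=\{\sum_{n=0}^\infty a_n v_n : a_n\ge 0,\ \text{the series converges in }\mathscr{H}\}$ (convergence of partial sums $\sum_{n=0}^N$). For $S\subset\mathbb{N}$, "$\sum_{n\in S}a_nv_n$ converges" means $\lim_{N\to\infty}\sum_{n\in S,\,n\le N}a_nv_n$ exists in $\mathscr{H}$; by convention $\sum_{n\in\emptyset}a_nv_n=0$. A sequence $\{v_n\}$ has no positive relations if whenever $\sum_{n=0}^\infty a_nv_n=\sum_{n=0}^\infty b_nv_n$ for two convergent series with all $a_n,b_n\ge 0$, one has $a_n=b_n$ for all $n$. For a closed convex set $K\subset\mathscr{H}$, $P_K(w)$ denotes the metric projection: the unique point of $K$ closest to $w$. *)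

theory Defs
  imports "HOL-Analysis.Analysis"
begin

definition sconv :: "nat set \<Rightarrow> (nat \<Rightarrow> 'a::{real_normed_vector}) \<Rightarrow> bool" where
  "sconv S f \<longleftrightarrow> convergent (\<lambda>N. \<Sum>n\<in>S \<inter> {..N}. f n)"

definition ssum :: "nat set \<Rightarrow> (nat \<Rightarrow> 'a::{real_normed_vector}) \<Rightarrow> 'a" where
  "ssum S f = lim (\<lambda>N. \<Sum>n\<in>S \<inter> {..N}. f n)"

definition pos_cone :: "(nat \<Rightarrow> 'a::real_normed_vector) \<Rightarrow> 'a set" where
  "pos_cone v = {x. \<exists>a. (\<forall>n. a n \<ge> 0) \<and> (\<lambda>n. a n *\<^sub>R v n) sums x}"

definition no_positive_relations :: "(nat \<Rightarrow> 'a::real_normed_vector) \<Rightarrow> bool" where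
  "no_positive_relations v \<longleftrightarrow>
     (\<forall>a b x. (\<forall>n. a n \<ge> 0) \<and> (\<forall>n. b n \<ge> 0) \<and>
        (\<lambda>n. a n *\<^sub>R v n) sums x \<and> (\<lambda>n. b n *\<^sub>R v n) sums x \<longrightarrow> a = b)"

definition metric_proj :: "'a::metric_space set \<Rightarrow> 'a \<Rightarrow> 'a" where
  "metric_proj K w = (THE x. x \<in> K \<and> (\<forall>y\<in>K. dist w x \<le> dist w y))"

end

theory Submission imports Defs begin
lemma parallelogram':
  fixes a b w :: "'a::real_inner"
  shows "norm (a - b)^2 = 2*norm(w-a)^2 + 2*norm(w-b)^2 - 4*norm(w - (1/2) *\<^sub>R (a+b))^2"
  unfolding power2_norm_eq_inner
  by (simp add: inner_diff_left inner_diff_right inner_add_left inner_add_right inner_commute algebra_simps)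

lemma exist_min:
  fixes K :: "'a::{real_inner,complete_space} set"
  assumes cl: "closed K" and cv: "convex K" and ne: "K \<noteq> {}"
  shows "\<exists>x\<in>K. \<forall>y\<in>K. dist w x \<le> dist w y"
proof -
  define d where "d = Inf ((\<lambda>y. dist w y) ` K)"
  have bdd: "bdd_below ((\<lambda>y. dist w y) ` K)" by (auto intro: bdd_belowI[of _ 0])
  have dle: "d \<le> dist w y" if "y\<in>K" for y using cINF_lower[OF bdd that] d_def by simp
  have d0: "d \<ge> 0" unfolding d_def using ne by (auto intro: cINF_greatest)
  have "\<exists>y\<in>K. dist w y ^2 < d^2 + 1/Suc n" for n
  proof -
    define e where "e = sqrt (d^2 + 1/Suc n)"
    have "d < e" unfolding e_def by (rule real_less_rsqrt) simp
    then obtain y where y: "y \<in> K" "dist w y < e" using cINF_less_iff[OF ne bdd] d_def by auto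
    have "dist w y ^2 < e^2" using y(2) by (simp add: power_strict_mono)
    also have "e^2 = d^2 + 1/Suc n" unfolding e_def by (simp add: add_nonneg_nonneg)
    finally show ?thesis using y by auto
  qed
  then obtain y where yK: "\<And>n. y n \<in> K" and yd: "\<And>n. dist w (y n)^2 < d^2 + 1/Suc n" by metis
  have bnd: "norm (y m - y n)^2 \<le> 2/Suc m + 2/Suc n" for m n
  proof -
    have "(1/2) *\<^sub>R (y m + y n) \<in> K"
      using cv yK[of m] yK[of n] unfolding convex_def scaleR_right_distrib
      by (metis field_sum_of_halves less_eq_real_def zero_less_divide_1_iff zero_less_numeral)
    then have "d \<le> norm (w - (1/2) *\<^sub>R (y m + y n))" using dle dist_norm by metis
    then have "d^2 \<le> norm (w - (1/2) *\<^sub>R (y m + y n))^2" using d0 power_mono by blast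
    moreover have "norm (w - y m)^2 < d^2 + 1/Suc m" "norm (w - y n)^2 < d^2 + 1/Suc n"
      using yd by (auto simp: dist_norm)
    ultimately show ?thesis using parallelogram'[of "y m" "y n" w] by simp
  qed
  have "Cauchy y"
  proof (rule metric_CauchyI)
    fix e :: real assume e: "e > 0"
    obtain M where M: "4 / e^2 < real M" using reals_Archimedean2 by blast
    have "4 < real M * e^2" using M pos_divide_less_eq[of "e^2" 4 "real M"] e by simp
    also have "\<dots> \<le> e^2 * real (Suc M)" using e by (simp add: mult.commute)
    finally have "4 / real (Suc M) < e^2" using pos_divide_less_eq[of "real (Suc M)" 4 "e^2"] by linarith
    show "\<exists>M. \<forall>m\<ge>M. \<forall>n\<ge>M. dist (y m) (y n) < e"
    proof (intro exI allI impI)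
      fix m n assume mn: "M \<le> m" "M \<le> n"
      have "2 / real (Suc m) \<le> 2 / Suc M" "2 / real (Suc n) \<le> 2 / Suc M"
        using mn by (auto intro!: divide_left_mono)
      then have "norm (y m - y n)^2 < e^2" using bnd[of m n] \<open>4 / real (Suc M) < e^2\<close> by simp
      then show "dist (y m) (y n) < e" using e by (simp add: dist_norm power_less_imp_less_base)
    qed
  qed
  then obtain l where l: "y \<longlonglongrightarrow> l" using Cauchy_convergent_iff convergent_def by blast
  have lK: "l \<in> K" using cl yK l closed_sequentially by blast
  have t1: "(\<lambda>n. dist w (y n)^2) \<longlonglongrightarrow> dist w l ^2" by (intro tendsto_intros l)
  have t2: "(\<lambda>n. d^2 + 1/Suc n) \<longlonglongrightarrow> d^2 + 0"
    by (rule tendsto_add[OF tendsto_const LIMSEQ_inverse_real_of_nat[unfolded inverse_eq_divide]])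
  have yd': "\<forall>n\<ge>0. dist w (y n)^2 \<le> d^2 + 1/Suc n" using yd[THEN less_imp_le] by blast
  have "dist w l ^2 \<le> d^2 + 0" by (rule LIMSEQ_le[OF t1 t2]) (use yd' in blast)
  then have "dist w l \<le> d" using power2_le_imp_le[OF _ d0] by simp
  then show ?thesis using lK dle \<open>dist w l \<le> d\<close> order_trans by blast
qed
lemma norm_expand:
  fixes u h :: "'a::real_inner"
  shows "norm (u - t *\<^sub>R h)^2 = norm u^2 - 2*t*inner u h + t^2 * norm h^2"
  unfolding power2_norm_eq_inner
  by (simp add: inner_diff_left inner_diff_right inner_commute algebra_simps power2_eq_square)

lemma vi_of_min:
  fixes K :: "'a::real_inner set"
  assumes cv: "convex K" and xK: "x\<in>K" and mn: "\<forall>y\<in>K. dist w x \<le> dist w y" and yK: "y\<in>K"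
  shows "inner (w - x) (y - x) \<le> 0"
proof (rule ccontr)
  define c where "c = inner (w - x) (y - x)"
  assume "\<not> ?thesis"
  then have c: "c > 0" unfolding c_def by simp
  then have "y \<noteq> x" unfolding c_def by auto
  define N where "N = norm (y - x)^2"
  have N: "N > 0" unfolding N_def using \<open>y \<noteq> x\<close> by simp
  define t where "t = min 1 (c / N)"
  have t0: "t > 0" "t \<le> 1" using c N unfolding t_def by auto
  have tN: "t * N \<le> c" unfolding t_def using N c
    by (metis min.cobounded2 mult.commute pos_le_divide_eq)
  have "(1 - t) *\<^sub>R x + t *\<^sub>R y \<in> K" using cv xK yK t0 unfolding convex_def by auto
  moreover have "(1 - t) *\<^sub>R x + t *\<^sub>R y = x + t *\<^sub>R (y - x)" by (simp add: algebra_simps)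
  ultimately have "dist w x \<le> dist w (x + t *\<^sub>R (y - x))" using mn by auto
  then have "norm (w - x) \<le> norm ((w - x) - t *\<^sub>R (y - x))" by (simp add: dist_norm algebra_simps)
  then have "norm (w - x)^2 \<le> norm ((w - x) - t *\<^sub>R (y - x))^2" by (simp add: power_mono)
  then have "0 \<le> - 2*t*c + t^2 * N" unfolding norm_expand c_def N_def by simp
  then have "2*t*c \<le> t * (t * N)" by (simp add: power2_eq_square algebra_simps)
  also have "\<dots> \<le> t * c" using tN t0 by (simp add: mult_left_mono)
  finally show False using t0 c by simp
qed

lemma min_of_vi:
  fixes K :: "'a::real_inner set"
  assumes vi: "\<forall>y\<in>K. inner (w - x) (y - x) \<le> 0" and yK: "y \<in> K"
  shows "dist w x \<le> dist w y"
proof -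
  have "norm (w - y)^2 = norm ((w - x) - 1 *\<^sub>R (y - x))^2" by (simp add: algebra_simps)
  also have "\<dots> = norm (w-x)^2 - 2 * inner (w - x) (y - x) + norm (y - x)^2"
    unfolding norm_expand by simp
  also have "\<dots> \<ge> norm (w - x)^2"
  proof -
    have h: "inner (w - x) (y - x) \<le> 0" using vi yK by auto
    show ?thesis using h zero_le_power2[of "norm (y - x)"] by linarith
  qed
  finally have "norm (w - x)^2 \<le> norm (w - y)^2" .
  then have "norm (w - x) \<le> norm (w - y)" using power2_le_imp_le[OF _ norm_ge_zero] by blast
  then show ?thesis by (simp add: dist_norm)
qed

lemma proj_eq:
  fixes K :: "'a::real_inner set"
  assumes cv: "convex K" and xK: "x\<in>K" and vi: "\<forall>y\<in>K. inner (w - x) (y - x) \<le> 0"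
  shows "metric_proj K w = x"
  unfolding metric_proj_def
proof (rule the_equality)
  show "x \<in> K \<and> (\<forall>y\<in>K. dist w x \<le> dist w y)" using xK min_of_vi[OF vi] by auto
next
  fix z assume z: "z \<in> K \<and> (\<forall>y\<in>K. dist w z \<le> dist w y)"
  have 1: "inner (w - z) (x - z) \<le> 0" using vi_of_min[OF cv, of z w x] z xK by auto
  have 2: "inner (w - x) (z - x) \<le> 0" using vi z by auto
  have "inner (x - z) (x - z) = inner (w - z) (x - z) + inner (w - x) (z - x)"
    by (simp add: inner_diff_left inner_diff_right inner_commute algebra_simps)
  then have "inner (x - z) (x - z) \<le> 0" using 1 2 by simp
  then have "inner (x - z) (x - z) = 0" using inner_ge_zero[of "x - z"] by linarith
  then show "z = x" by simp
qed

lemma proj_props: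
  fixes K :: "'a::{real_inner,complete_space} set"
  assumes "closed K" "convex K" "K \<noteq> {}"
  shows "metric_proj K w \<in> K \<and> (\<forall>y\<in>K. inner (w - metric_proj K w) (y - metric_proj K w) \<le> 0)"
proof -
  obtain x where x: "x \<in> K" "\<forall>y\<in>K. dist w x \<le> dist w y" using exist_min[OF assms] by blast
  have vi: "\<forall>y\<in>K. inner (w - x) (y - x) \<le> 0" using vi_of_min[OF assms(2) x(1) x(2)] by blast
  show ?thesis using proj_eq[OF assms(2) x(1) vi] x(1) vi by simp
qed

lemma sums_scaleR_r: "f sums s \<Longrightarrow> (\<lambda>n. c *\<^sub>R f n) sums (c *\<^sub>R s)"
  for f :: "nat \<Rightarrow> 'a::real_normed_vector"
  by (rule bounded_linear.sums[OF bounded_linear_scaleR_right])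

lemma sums_inner_r: "f sums s \<Longrightarrow> (\<lambda>n. inner z (f n)) sums (inner z s)"
  by (rule bounded_linear.sums[OF bounded_linear_inner_right])

lemma cone_convex: "convex (pos_cone v)"
proof (rule convexI)
  fix x y :: 'a and u w :: real
  assume x: "x \<in> pos_cone v" and y: "y \<in> pos_cone v" and u: "0 \<le> u" and w: "0 \<le> w" and "u + w = 1"
  obtain a where a: "\<forall>n. a n \<ge> 0" "(\<lambda>n. a n *\<^sub>R v n) sums x" using x unfolding pos_cone_def by auto
  obtain b where b: "\<forall>n. b n \<ge> 0" "(\<lambda>n. b n *\<^sub>R v n) sums y" using y unfolding pos_cone_def by auto
  have "(\<lambda>n. u *\<^sub>R (a n *\<^sub>R v n) + w *\<^sub>R (b n *\<^sub>R v n)) sums (u *\<^sub>R x + w *\<^sub>R y)"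
    by (intro sums_add sums_scaleR_r a b)
  moreover have "(\<lambda>n. u *\<^sub>R (a n *\<^sub>R v n) + w *\<^sub>R (b n *\<^sub>R v n)) = (\<lambda>n. (u * a n + w * b n) *\<^sub>R v n)"
    by (rule ext) (simp add: scaleR_add_left)
  ultimately have "(\<lambda>n. (u * a n + w * b n) *\<^sub>R v n) sums (u *\<^sub>R x + w *\<^sub>R y)"
    by simp
  moreover have "\<forall>n. u * a n + w * b n \<ge> 0" using a b u w by (simp add: add_nonneg_nonneg)
  ultimately show "u *\<^sub>R x + w *\<^sub>R y \<in> pos_cone v" unfolding pos_cone_def
    by (intro CollectI exI[of _ "\<lambda>n. u * a n + w * b n"] conjI)
qed

lemma cone_ne: "0 \<in> pos_cone v"
  unfolding pos_cone_def by (rule CollectI, rule exI[of _ "\<lambda>_. 0"]) simp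

lemma sconv_iff:
  fixes f :: "nat \<Rightarrow> 'a::real_normed_vector"
  shows "(\<lambda>k. if k\<in>S then f k else 0) sums x \<longleftrightarrow> sconv S f \<and> ssum S f = x"
proof -
  define P where "P = (\<lambda>N. \<Sum>n\<in>S \<inter> {..N}. f n)"
  have P: "P = (\<lambda>N. \<Sum>k<Suc N. (if k\<in>S then f k else 0))"
    unfolding P_def lessThan_Suc_atMost
    by (rule ext, subst Int_commute, rule sum.inter_restrict) simp
  have "(\<lambda>k. if k\<in>S then f k else 0) sums x \<longleftrightarrow> P \<longlonglongrightarrow> x"
    unfolding sums_def P by (rule filterlim_sequentially_Suc[symmetric])
  also have "\<dots> \<longleftrightarrow> convergent P \<and> lim P = x"
    by (metis convergent_LIMSEQ_iff convergent_def limI)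
  finally show ?thesis unfolding sconv_def ssum_def P_def .
qed

lemma ssum_inner:
  fixes v :: "nat \<Rightarrow> 'a::real_inner"
  assumes "sconv S (\<lambda>k. a k *\<^sub>R v k)"
  shows "ssum S (\<lambda>k. a k * inner (v k) y) = inner (ssum S (\<lambda>k. a k *\<^sub>R v k)) y"
proof -
  define P where "P = (\<lambda>N. \<Sum>n\<in>S \<inter> {..N}. a n *\<^sub>R v n)"
  have "P \<longlonglongrightarrow> lim P" using assms unfolding sconv_def P_def by (simp add: convergent_LIMSEQ_iff)
  then have "(\<lambda>N. inner (P N) y) \<longlonglongrightarrow> inner (lim P) y" by (intro tendsto_intros)
  moreover have "(\<lambda>N. inner (P N) y) = (\<lambda>N. \<Sum>n\<in>S \<inter> {..N}. a n * inner (v n) y)"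
    unfolding P_def by (simp add: inner_sum_left)
  ultimately show ?thesis unfolding ssum_def P_def by (simp add: limI)
qed
lemma unique_rep:
  fixes v :: "nat \<Rightarrow> 'a::real_normed_vector"
  assumes npr: "no_positive_relations v"
    and h: "sconv S (\<lambda>n. a n *\<^sub>R v n)" "\<forall>n\<in>S. a n > 0"
       "sconv S' (\<lambda>n. a' n *\<^sub>R v n)" "\<forall>n\<in>S'. a' n > 0"
       "ssum S (\<lambda>n. a n *\<^sub>R v n) = ssum S' (\<lambda>n. a' n *\<^sub>R v n)"
  shows "S = S' \<and> (\<forall>n\<in>S. a n = a' n)"
proof -
  define b where "b = (\<lambda>k. if k \<in> S then a k else 0)"
  define b' where "b' = (\<lambda>k. if k \<in> S' then a' k else 0)"
  have e1: "(\<lambda>k. b k *\<^sub>R v k) = (\<lambda>k. if k \<in> S then a k *\<^sub>R v k else 0)" unfolding b_def by auto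
  have e2: "(\<lambda>k. b' k *\<^sub>R v k) = (\<lambda>k. if k \<in> S' then a' k *\<^sub>R v k else 0)" unfolding b'_def by auto
  have s1: "(\<lambda>k. b k *\<^sub>R v k) sums ssum S (\<lambda>n. a n *\<^sub>R v n)" unfolding e1 sconv_iff using h by simp
  have s2: "(\<lambda>k. b' k *\<^sub>R v k) sums ssum S (\<lambda>n. a n *\<^sub>R v n)" unfolding e2 sconv_iff using h by simp
  have "\<forall>n. b n \<ge> 0" "\<forall>n. b' n \<ge> 0" using h unfolding b_def b'_def by (auto simp: less_imp_le)
  then have bb: "b = b'" using npr s1 s2 unfolding no_positive_relations_def by blast
  have "S = {k. b k > 0}" "S' = {k. b' k > 0}" using h unfolding b_def b'_def by auto
  then have "S = S'" using bb by simp
  moreover have "\<forall>n\<in>S. a n = a' n" using bb \<open>S = S'\<close> unfolding b_def b'_def by (metis (full_types))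
  ultimately show ?thesis by blast
qed

lemma char_proj:
  fixes v :: "nat \<Rightarrow> 'a::real_inner"
  assumes h: "sconv S (\<lambda>n. a n *\<^sub>R v n)" "\<forall>n\<in>S. a n > 0"
    "\<forall>n. ssum S (\<lambda>k. a k * inner (v k) (v n)) \<ge> inner w (v n)"
    "\<forall>n\<in>S. ssum S (\<lambda>k. a k * inner (v k) (v n)) = inner w (v n)"
  shows "metric_proj (pos_cone v) w = ssum S (\<lambda>n. a n *\<^sub>R v n)"
proof -
  define x0 where "x0 = ssum S (\<lambda>n. a n *\<^sub>R v n)"
  define b where "b = (\<lambda>k. if k \<in> S then a k else 0)"
  have e1: "(\<lambda>k. b k *\<^sub>R v k) = (\<lambda>k. if k \<in> S then a k *\<^sub>R v k else 0)" unfolding b_def by auto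
  have s1: "(\<lambda>k. b k *\<^sub>R v k) sums x0" unfolding e1 sconv_iff x0_def using h by simp
  have b0: "\<forall>n. b n \<ge> 0" using h unfolding b_def by (auto simp: less_imp_le)
  have x0K: "x0 \<in> pos_cone v" unfolding pos_cone_def using b0 s1 by blast
  have ge: "inner (w - x0) (v n) \<le> 0" for n
    using spec[OF h(3), of n] ssum_inner[OF h(1), of "v n"] unfolding x0_def by (simp add: inner_diff_left)
  have eq: "inner (w - x0) (v n) = 0" if "n \<in> S" for n
    using bspec[OF h(4) that] ssum_inner[OF h(1), of "v n"] unfolding x0_def by (simp add: inner_diff_left)
  have vi: "\<forall>y\<in>pos_cone v. inner (w - x0) (y - x0) \<le> 0"
  proof
    fix y assume "y \<in> pos_cone v"
    then obtain c where c: "\<forall>n. c n \<ge> 0" "(\<lambda>n. c n *\<^sub>R v n) sums y" unfolding pos_cone_def by auto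
    have A: "(\<lambda>n. inner (w - x0) (c n *\<^sub>R v n)) sums inner (w - x0) y" using sums_inner_r[OF c(2)] .
    have B: "(\<lambda>n. 0) sums (0::real)" by simp
    have C: "inner (w - x0) (c n *\<^sub>R v n) \<le> 0" for n
      using c(1) ge[of n] by (simp add: mult_nonneg_nonpos)
    have y1: "inner (w - x0) y \<le> 0" using sums_le[OF C A B] .
    have "(\<lambda>n. inner (w - x0) (b n *\<^sub>R v n)) sums inner (w - x0) x0" using sums_inner_r[OF s1] .
    moreover have "(\<lambda>n. inner (w - x0) (b n *\<^sub>R v n)) = (\<lambda>n. 0)"
      using eq unfolding b_def by auto
    ultimately have "inner (w - x0) x0 = 0" by (simp add: sums_iff)
    then show "inner (w - x0) (y - x0) \<le> 0" using y1 by (simp add: inner_diff_right)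
  qed
  show ?thesis using proj_eq[OF cone_convex x0K vi] unfolding x0_def .
qed

theorem proposition1p3:
  fixes v :: "nat \<Rightarrow> 'a::{real_inner, complete_space}"
  assumes npr: "no_positive_relations v"
    and cl: "closed (pos_cone v)"
  shows "\<forall>w::'a.
    (\<exists>S a. sconv S (\<lambda>n. a n *\<^sub>R v n) \<and> (\<forall>n\<in>S. a n > 0)
        \<and> (\<forall>n. ssum S (\<lambda>k. a k * inner (v k) (v n)) \<ge> inner w (v n))
        \<and> (\<forall>n\<in>S. ssum S (\<lambda>k. a k * inner (v k) (v n)) = inner w (v n))
        \<and> metric_proj (pos_cone v) w = ssum S (\<lambda>n. a n *\<^sub>R v n))
    \<and> (\<forall>S a S' a'.
        sconv S (\<lambda>n. a n *\<^sub>R v n) \<and> (\<forall>n\<in>S. a n > 0)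
          \<and> metric_proj (pos_cone v) w = ssum S (\<lambda>n. a n *\<^sub>R v n)
        \<and> sconv S' (\<lambda>n. a' n *\<^sub>R v n) \<and> (\<forall>n\<in>S'. a' n > 0)
          \<and> metric_proj (pos_cone v) w = ssum S' (\<lambda>n. a' n *\<^sub>R v n)
        \<longrightarrow> S = S' \<and> (\<forall>n\<in>S. a n = a' n))
    \<and> (\<forall>S a S' a'.
        sconv S (\<lambda>n. a n *\<^sub>R v n) \<and> (\<forall>n\<in>S. a n > 0)
          \<and> (\<forall>n. ssum S (\<lambda>k. a k * inner (v k) (v n)) \<ge> inner w (v n))
          \<and> (\<forall>n\<in>S. ssum S (\<lambda>k. a k * inner (v k) (v n)) = inner w (v n))
        \<and> sconv S' (\<lambda>n. a' n *\<^sub>R v n) \<and> (\<forall>n\<in>S'. a' n > 0)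
          \<and> (\<forall>n. ssum S' (\<lambda>k. a' k * inner (v k) (v n)) \<ge> inner w (v n))
          \<and> (\<forall>n\<in>S'. ssum S' (\<lambda>k. a' k * inner (v k) (v n)) = inner w (v n))
        \<longrightarrow> S = S' \<and> (\<forall>n\<in>S. a n = a' n))"
proof (rule allI, intro conjI)
  fix w :: 'a
  define K where "K = pos_cone v"
  define x where "x = metric_proj K w"
  have pp: "x \<in> K \<and> (\<forall>y\<in>K. inner (w - x) (y - x) \<le> 0)"
    unfolding x_def K_def using proj_props[OF cl cone_convex] cone_ne by blast
  then have "x \<in> pos_cone v" unfolding K_def by simp
  then obtain c where c: "\<forall>n. c n \<ge> 0" "(\<lambda>n. c n *\<^sub>R v n) sums x" unfolding pos_cone_def by blast
  have vi: "\<forall>y\<in>K. inner (w - x) (y - x) \<le> 0" using pp by blast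
  have inK: "y \<in> K" if "\<forall>k. e k \<ge> 0" "(\<lambda>k. e k *\<^sub>R v k) sums y" for e y
    unfolding K_def pos_cone_def using that by blast
  define S where "S = {n. c n > 0}"
  have "(\<lambda>k. if k \<in> S then c k *\<^sub>R v k else 0) = (\<lambda>k. c k *\<^sub>R v k)"
  proof (rule ext)
    fix k show "(if k \<in> S then c k *\<^sub>R v k else 0) = c k *\<^sub>R v k"
    proof (cases "k \<in> S")
      case False then have "c k = 0" using c(1) unfolding S_def by (simp add: less_le)
      then show ?thesis by simp
    qed simp
  qed
  then have "(\<lambda>k. if k \<in> S then c k *\<^sub>R v k else 0) sums x" using c(2) by simp
  then have sc: "sconv S (\<lambda>n. c n *\<^sub>R v n)" and ss: "ssum S (\<lambda>n. c n *\<^sub>R v n) = x"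
    unfolding sconv_iff by simp_all
  have ge: "inner w (v n) \<le> inner x (v n)" for n
  proof -
    have A: "(\<lambda>k. c k *\<^sub>R v k + (if k = n then v k else 0)) sums (x + v n)"
      by (intro sums_add c(2) sums_single)
    have B: "(\<lambda>k. c k *\<^sub>R v k + (if k = n then v k else 0)) = (\<lambda>k. (c k + (if k = n then 1 else 0)) *\<^sub>R v k)"
      by (rule ext) (simp add: scaleR_add_left)
    have C: "\<forall>k. c k + (if k = n then 1 else 0) \<ge> 0" using c(1) by simp
    have "x + v n \<in> K" using inK[OF C] A B by simp
    then have "inner (w - x) ((x + v n) - x) \<le> 0" using vi by blast
    then show ?thesis by (simp add: inner_diff_left)
  qed
  have eqS: "inner w (v n) = inner x (v n)" if nS: "n \<in> S" for n
  proof -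
    have A: "(\<lambda>k. c k *\<^sub>R v k - (if k = n then c k *\<^sub>R v k else 0)) sums (x - c n *\<^sub>R v n)"
      by (intro sums_diff c(2) sums_single)
    have B: "(\<lambda>k. c k *\<^sub>R v k - (if k = n then c k *\<^sub>R v k else 0)) = (\<lambda>k. (if k = n then 0 else c k) *\<^sub>R v k)"
      by (rule ext) simp
    have C: "\<forall>k. (if k = n then 0 else c k) \<ge> 0" using c(1) by simp
    have "x - c n *\<^sub>R v n \<in> K" using inK[OF C] A B by simp
    then have "inner (w - x) ((x - c n *\<^sub>R v n) - x) \<le> 0" using vi by blast
    then have "c n * inner (w - x) (v n) \<ge> 0" by simp
    moreover have "c n > 0" using nS unfolding S_def by simp
    ultimately have "inner (w - x) (v n) \<ge> 0" by (simp add: zero_le_mult_iff)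
    then show ?thesis using ge[of n] by (simp add: inner_diff_left)
  qed
  have cpos: "\<forall>n\<in>S. c n > 0" unfolding S_def by simp
  have ii: "\<forall>n. ssum S (\<lambda>k. c k * inner (v k) (v n)) \<ge> inner w (v n)"
    using ge ssum_inner[OF sc] ss by simp
  have iii: "\<forall>n\<in>S. ssum S (\<lambda>k. c k * inner (v k) (v n)) = inner w (v n)"
    using eqS ssum_inner[OF sc] ss by simp
  have pr: "metric_proj (pos_cone v) w = ssum S (\<lambda>n. c n *\<^sub>R v n)"
    using ss unfolding x_def K_def by simp
  show "\<exists>S a. sconv S (\<lambda>n. a n *\<^sub>R v n) \<and> (\<forall>n\<in>S. a n > 0)
        \<and> (\<forall>n. ssum S (\<lambda>k. a k * inner (v k) (v n)) \<ge> inner w (v n))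
        \<and> (\<forall>n\<in>S. ssum S (\<lambda>k. a k * inner (v k) (v n)) = inner w (v n))
        \<and> metric_proj (pos_cone v) w = ssum S (\<lambda>n. a n *\<^sub>R v n)"
    by (rule exI[of _ S], rule exI[of _ c]) (intro conjI sc cpos ii iii pr)
next
  fix w :: 'a
  show "\<forall>S a S' a'.
        sconv S (\<lambda>n. a n *\<^sub>R v n) \<and> (\<forall>n\<in>S. a n > 0)
          \<and> metric_proj (pos_cone v) w = ssum S (\<lambda>n. a n *\<^sub>R v n)
        \<and> sconv S' (\<lambda>n. a' n *\<^sub>R v n) \<and> (\<forall>n\<in>S'. a' n > 0)
          \<and> metric_proj (pos_cone v) w = ssum S' (\<lambda>n. a' n *\<^sub>R v n)
        \<longrightarrow> S = S' \<and> (\<forall>n\<in>S. a n = a' n)"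
  proof (intro allI impI)
    fix S a S' a'
    assume H: "sconv S (\<lambda>n. a n *\<^sub>R v n) \<and> (\<forall>n\<in>S. a n > 0)
          \<and> metric_proj (pos_cone v) w = ssum S (\<lambda>n. a n *\<^sub>R v n)
        \<and> sconv S' (\<lambda>n. a' n *\<^sub>R v n) \<and> (\<forall>n\<in>S'. a' n > 0)
          \<and> metric_proj (pos_cone v) w = ssum S' (\<lambda>n. a' n *\<^sub>R v n)"
    then have H1: "sconv S (\<lambda>n. a n *\<^sub>R v n)" "\<forall>n\<in>S. a n > 0"
        "metric_proj (pos_cone v) w = ssum S (\<lambda>n. a n *\<^sub>R v n)"
      and H2: "sconv S' (\<lambda>n. a' n *\<^sub>R v n)" "\<forall>n\<in>S'. a' n > 0"
        "metric_proj (pos_cone v) w = ssum S' (\<lambda>n. a' n *\<^sub>R v n)"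
      by auto
    have e: "ssum S (\<lambda>n. a n *\<^sub>R v n) = ssum S' (\<lambda>n. a' n *\<^sub>R v n)"
      using trans[OF sym[OF H1(3)] H2(3)] .
    show "S = S' \<and> (\<forall>n\<in>S. a n = a' n)"
      by (rule unique_rep[OF npr H1(1) H1(2) H2(1) H2(2) e])
  qed
next
  fix w :: 'a
  show "\<forall>S a S' a'.
        sconv S (\<lambda>n. a n *\<^sub>R v n) \<and> (\<forall>n\<in>S. a n > 0)
          \<and> (\<forall>n. ssum S (\<lambda>k. a k * inner (v k) (v n)) \<ge> inner w (v n))
          \<and> (\<forall>n\<in>S. ssum S (\<lambda>k. a k * inner (v k) (v n)) = inner w (v n))
        \<and> sconv S' (\<lambda>n. a' n *\<^sub>R v n) \<and> (\<forall>n\<in>S'. a' n > 0)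
          \<and> (\<forall>n. ssum S' (\<lambda>k. a' k * inner (v k) (v n)) \<ge> inner w (v n))
          \<and> (\<forall>n\<in>S'. ssum S' (\<lambda>k. a' k * inner (v k) (v n)) = inner w (v n))
        \<longrightarrow> S = S' \<and> (\<forall>n\<in>S. a n = a' n)"
  proof (intro allI impI)
    fix S a S' a'
    assume H: "sconv S (\<lambda>n. a n *\<^sub>R v n) \<and> (\<forall>n\<in>S. a n > 0)
          \<and> (\<forall>n. ssum S (\<lambda>k. a k * inner (v k) (v n)) \<ge> inner w (v n))
          \<and> (\<forall>n\<in>S. ssum S (\<lambda>k. a k * inner (v k) (v n)) = inner w (v n))
        \<and> sconv S' (\<lambda>n. a' n *\<^sub>R v n) \<and> (\<forall>n\<in>S'. a' n > 0)
          \<and> (\<forall>n. ssum S' (\<lambda>k. a' k * inner (v k) (v n)) \<ge> inner w (v n))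
          \<and> (\<forall>n\<in>S'. ssum S' (\<lambda>k. a' k * inner (v k) (v n)) = inner w (v n))"
    then have H1: "sconv S (\<lambda>n. a n *\<^sub>R v n)" "\<forall>n\<in>S. a n > 0"
          "\<forall>n. ssum S (\<lambda>k. a k * inner (v k) (v n)) \<ge> inner w (v n)"
          "\<forall>n\<in>S. ssum S (\<lambda>k. a k * inner (v k) (v n)) = inner w (v n)"
        and H2: "sconv S' (\<lambda>n. a' n *\<^sub>R v n)" "\<forall>n\<in>S'. a' n > 0"
          "\<forall>n. ssum S' (\<lambda>k. a' k * inner (v k) (v n)) \<ge> inner w (v n)"
          "\<forall>n\<in>S'. ssum S' (\<lambda>k. a' k * inner (v k) (v n)) = inner w (v n)"
      by auto
    have e: "ssum S (\<lambda>n. a n *\<^sub>R v n) = ssum S' (\<lambda>n. a' n *\<^sub>R v n)"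
      using char_proj[OF H1] char_proj[OF H2] by simp
    show "S = S' \<and> (\<forall>n\<in>S. a n = a' n)"
      by (rule unique_rep[OF npr H1(1) H1(2) H2(1) H2(2) e])
  qed
qed

end
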